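(* For all $y\in\{0,1\}^n$ with $y\ne0^n$ and all integers $r\ge0$, on the $\ell$-boson subspace, $$\|\tilde G_y\cdot\mathsf{Con}_r\|_{\mathrm{op}}\le\sqrt r+\sqrt{2+4r},\qquad\|\tilde H_y\cdot\mathsf{Con}_r\|_{\mathrm{op}}\le9r+9.$$
   Context: Bosonic setting with $2^n$ modes indexed by $\{0,1\}^n$: position operators $\hat a_x,\hat a_x^\dagger$ (standard bosonic commutation relations), vacuum $|\mathrm{vac}\rangle$, momentum operators $\tilde a_y=2^{-n/2}\sum_x(-1)^{x\cdot y}\hat a_x$ and $\tilde a_y^\dagger$ likewise, momentum Fock states $|u\rangle=\prod_y(\tilde a_y^\dagger)^{u_y}(u_y!)^{-1/2}|\mathrm{vac}\rangle$. We work in the subspace of exactly $\ell$ bosons. $\tilde G_y=\frac1{\sqrt\ell}\sum_x\tilde a^\dagger_{x\oplus y}\tilde a_x$ and $\tilde H_y=\frac1\ell\sum_{x,x'}\tilde a^\dagger_{x\oplus y}\tilde a^\dagger_{x'\oplus y}\tilde a_x\tilde a_{x'}$. $\mathsf{Con}_r$ is the projector onto the span of momentum Fock states $|u\rangle$ with $\sum_yu_y=\ell$ and $u_{0^n}\ge\ell-r$ ($r$-condensates). *)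

theory Defs
  imports Complex_Main
begin

text \<open>Modes are indexed by \<open>{0,1}^n\<close>, encoded as naturals \<open>x < 2^n\<close> (binary digits);
  \<open>x \<oplus> y\<close> is bitwise xor and \<open>0^n\<close> is \<open>0\<close>.  Since all operators in the statement
  are built from momentum operators, we work in the (orthonormal) momentum Fock basis:
  a state is a coefficient function on momentum occupation vectors \<open>u :: nat \<Rightarrow> nat\<close>.\<close>

definition modes :: "nat \<Rightarrow> nat set" where
  "modes n = {..<2^n}"

definition configs :: "nat \<Rightarrow> nat \<Rightarrow> (nat \<Rightarrow> nat) set" where
  "configs n l = {u. (\<forall>x. x \<notin> modes n \<longrightarrow> u x = 0) \<and> (\<Sum>x\<in>modes n. u x) = l}"

type_synonym state = "(nat \<Rightarrow> nat) \<Rightarrow> complex"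
type_synonym op = "state \<Rightarrow> state"

text \<open>Momentum annihilation: \<open>a_x |u\<rangle> = sqrt(u_x) |u - e_x\<rangle>\<close>.\<close>
definition ann :: "nat \<Rightarrow> op" where
  "ann x \<psi> = (\<lambda>v. complex_of_real (sqrt (real (v x + 1))) * \<psi> (v(x := v x + 1)))"

text \<open>Momentum creation: \<open>a_x^\<dagger> |u\<rangle> = sqrt(u_x+1) |u + e_x\<rangle>\<close>.\<close>
definition cre :: "nat \<Rightarrow> op" where
  "cre x \<psi> = (\<lambda>v. if 0 < v x then complex_of_real (sqrt (real (v x))) * \<psi> (v(x := v x - 1)) else 0)"

definition Gt :: "nat \<Rightarrow> nat \<Rightarrow> nat \<Rightarrow> op" where
  "Gt n l y \<psi> = (\<lambda>v. complex_of_real (1 / sqrt (real l)) *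
      (\<Sum>x\<in>modes n. cre (xor x y) (ann x \<psi>) v))"

definition Ht :: "nat \<Rightarrow> nat \<Rightarrow> nat \<Rightarrow> op" where
  "Ht n l y \<psi> = (\<lambda>v. complex_of_real (1 / real l) *
      (\<Sum>x\<in>modes n. \<Sum>x'\<in>modes n.
          cre (xor x y) (cre (xor x' y) (ann x (ann x' \<psi>))) v))"

definition Con :: "nat \<Rightarrow> nat \<Rightarrow> nat \<Rightarrow> op" where
  "Con n l r \<psi> = (\<lambda>u. if u \<in> configs n l \<and> l - r \<le> u 0 then \<psi> u else 0)"

definition snorm :: "nat \<Rightarrow> nat \<Rightarrow> state \<Rightarrow> real" where
  "snorm n l \<psi> = sqrt (\<Sum>u\<in>configs n l. (cmod (\<psi> u))\<^sup>2)"

definition in_sector :: "nat \<Rightarrow> nat \<Rightarrow> state \<Rightarrow> bool" where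
  "in_sector n l \<psi> \<longleftrightarrow> (\<forall>u. u \<notin> configs n l \<longrightarrow> \<psi> u = 0)"

definition opnorm :: "nat \<Rightarrow> nat \<Rightarrow> op \<Rightarrow> real" where
  "opnorm n l A = Sup {snorm n l (A \<psi>) | \<psi>. in_sector n l \<psi> \<and> snorm n l \<psi> \<le> 1}"

end

theory Submission
  imports Defs "HOL-Analysis.Analysis"
begin


lemma xor_xx[simp]: "xor (xor x y) y = (x::nat)" by (simp add: xor.assoc)
lemma xor_xx2[simp]: "xor x (xor x y) = (y::nat)" by (simp add: xor.assoc[symmetric])
lemma xor_ne: "(y::nat) \<noteq> 0 \<Longrightarrow> xor x y \<noteq> x"
proof
  assume "y \<noteq> 0" and h: "xor x y = x"
  have "y = xor x (xor x y)" by simp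
  also have "\<dots> = xor x x" using h by simp
  also have "\<dots> = 0" by simp
  finally show False using \<open>y \<noteq> 0\<close> by simp
qed
lemma xor_modes: "x \<in> modes n \<Longrightarrow> y \<in> modes n \<Longrightarrow> xor x y \<in> modes n"
  unfolding modes_def lessThan_iff by (metis take_bit_nat_eq_self_iff take_bit_xor)

lemma snorm_L2: "snorm n l \<psi> = L2_set (\<lambda>u. cmod (\<psi> u)) (configs n l)"
  by (simp add: snorm_def L2_set_def)

lemma snorm_nonneg: "snorm n l \<psi> \<ge> 0" by (simp add: snorm_def sum_nonneg)

lemma snorm_diff: "snorm n l (\<lambda>v. f v - g v) \<le> snorm n l f + snorm n l g"
proof -
  have "snorm n l (\<lambda>v. f v - g v) \<le> L2_set (\<lambda>u. cmod (f u) + cmod (g u)) (configs n l)"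
    unfolding snorm_L2 by (rule L2_set_mono) (simp_all only: norm_triangle_ineq4 norm_ge_zero)
  also have "\<dots> \<le> snorm n l f + snorm n l g"
    unfolding snorm_L2 by (rule L2_set_triangle_ineq)
  finally show ?thesis .
qed

lemma snorm_mono: "(\<And>u. u \<in> configs n l \<Longrightarrow> cmod (f u) \<le> cmod (g u)) \<Longrightarrow> snorm n l f \<le> snorm n l g"
  unfolding snorm_L2 by (rule L2_set_mono) auto

lemma wCS:
  fixes m a :: "'a \<Rightarrow> real"
  assumes "\<And>i. i \<in> I \<Longrightarrow> m i \<ge> 0"
  shows "(\<Sum>i\<in>I. m i * a i)\<^sup>2 \<le> (\<Sum>i\<in>I. m i) * (\<Sum>i\<in>I. m i * (a i)\<^sup>2)"
proof -
  have "(\<Sum>i\<in>I. m i * a i) = (\<Sum>i\<in>I. sqrt (m i) * (sqrt (m i) * a i))"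
    by (rule sum.cong) (use assms in \<open>auto simp: real_sqrt_mult_self mult.assoc[symmetric]\<close>)
  moreover have "(\<Sum>i\<in>I. m i) = (\<Sum>i\<in>I. (sqrt (m i))\<^sup>2)"
    by (rule sum.cong) (use assms in auto)
  moreover have "(\<Sum>i\<in>I. m i * (a i)\<^sup>2) = (\<Sum>i\<in>I. (sqrt (m i) * a i)\<^sup>2)"
    by (rule sum.cong) (use assms in \<open>auto simp: power_mult_distrib\<close>)
  ultimately show ?thesis using Cauchy_Schwarz_ineq_sum by metis
qed

lemma schur:
  fixes M :: "'a \<Rightarrow> 'a \<Rightarrow> real" and \<phi> :: "'a \<Rightarrow> complex"
  assumes "finite V" "finite S" "\<And>v u. M v u \<ge> 0" "K1 \<ge> 0"
    and row: "\<And>v. v \<in> V \<Longrightarrow> (\<Sum>u\<in>S. M v u) \<le> K1"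
    and col: "\<And>u. u \<in> S \<Longrightarrow> (\<Sum>v\<in>V. M v u) \<le> K2"
  shows "(\<Sum>v\<in>V. (cmod (\<Sum>u\<in>S. of_real (M v u) * \<phi> u))\<^sup>2) \<le> K1 * K2 * (\<Sum>u\<in>S. (cmod (\<phi> u))\<^sup>2)"
proof -
  have "(\<Sum>v\<in>V. (cmod (\<Sum>u\<in>S. of_real (M v u) * \<phi> u))\<^sup>2)
      \<le> (\<Sum>v\<in>V. K1 * (\<Sum>u\<in>S. M v u * (cmod (\<phi> u))\<^sup>2))"
  proof (rule sum_mono)
    fix v assume v: "v \<in> V"
    have "cmod (\<Sum>u\<in>S. of_real (M v u) * \<phi> u) \<le> (\<Sum>u\<in>S. M v u * cmod (\<phi> u))"
      by (rule order_trans[OF norm_sum]) (simp add: norm_mult assms(3))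
    hence "(cmod (\<Sum>u\<in>S. of_real (M v u) * \<phi> u))\<^sup>2 \<le> (\<Sum>u\<in>S. M v u * cmod (\<phi> u))\<^sup>2"
      by (rule power_mono) simp
    also have "\<dots> \<le> (\<Sum>u\<in>S. M v u) * (\<Sum>u\<in>S. M v u * (cmod (\<phi> u))\<^sup>2)"
      by (rule wCS) (use assms in auto)
    also have "\<dots> \<le> K1 * (\<Sum>u\<in>S. M v u * (cmod (\<phi> u))\<^sup>2)"
      by (rule mult_right_mono) (use row v assms(3) in \<open>auto intro: sum_nonneg\<close>)
    finally show "(cmod (\<Sum>u\<in>S. of_real (M v u) * \<phi> u))\<^sup>2 \<le> K1 * (\<Sum>u\<in>S. M v u * (cmod (\<phi> u))\<^sup>2)" .
  qed
  also have "\<dots> = K1 * (\<Sum>u\<in>S. (\<Sum>v\<in>V. M v u) * (cmod (\<phi> u))\<^sup>2)"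
    by (simp add: sum_distrib_left sum_distrib_right sum.swap[of _ V S])
  also have "\<dots> \<le> K1 * (\<Sum>u\<in>S. K2 * (cmod (\<phi> u))\<^sup>2)"
    by (rule mult_left_mono, rule sum_mono, rule mult_right_mono) (use col assms in auto)
  also have "\<dots> = K1 * K2 * (\<Sum>u\<in>S. (cmod (\<phi> u))\<^sup>2)"
    unfolding sum_distrib_left by (simp add: mult.assoc)
  finally show ?thesis .
qed



lemma cre_sum: "cre z (\<lambda>w. \<Sum>i\<in>I. f i w) v = (\<Sum>i\<in>I. cre z (f i) v)"
  by (simp add: cre_def sum_distrib_left)
lemma cre_scale: "cre z (\<lambda>w. c * f w) v = c * cre z f v"
  by (simp add: cre_def)
lemma cre_add: "cre z (\<lambda>w. f w + g w) v = cre z f v + cre z g v"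
  by (simp add: cre_def distrib_left)
lemma ann_sum: "ann z (\<lambda>w. \<Sum>i\<in>I. f i w) v = (\<Sum>i\<in>I. ann z (f i) v)"
  by (simp add: ann_def sum_distrib_left)
lemma ann_scale: "ann z (\<lambda>w. c * f w) v = c * ann z f v"
  by (simp add: ann_def)

lemma sqrt_sq_c: "0 \<le> a \<Longrightarrow> complex_of_real (sqrt a) * complex_of_real (sqrt a) = complex_of_real a"
  by (simp flip: of_real_mult)

lemma comm_ne: "x \<noteq> z \<Longrightarrow> ann x (cre z \<phi>) w = cre z (ann x \<phi>) w"
proof -
  assume xz: "x \<noteq> z"
  have e: "w(x := Suc (w x), z := w z - Suc 0) = w(z := w z - Suc 0, x := Suc (w x))" using xz by (rule fun_upd_twist)
  show ?thesis using xz by (simp add: ann_def cre_def e mult.left_commute)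
qed
lemma ann_cre_same: "ann x (cre x \<phi>) w = of_nat (w x + 1) * \<phi> w"
proof -
  have "ann x (cre x \<phi>) w = (complex_of_real (sqrt (real (w x + 1))) * complex_of_real (sqrt (real (w x + 1)))) * \<phi> w"
    unfolding ann_def cre_def by simp
  also have "\<dots> = of_nat (w x + 1) * \<phi> w" by (subst sqrt_sq_c) auto
  finally show ?thesis .
qed
lemma number: "cre x (ann x \<phi>) v = of_nat (v x) * \<phi> v"
proof (cases "v x = 0")
  case False
  have "cre x (ann x \<phi>) v = (complex_of_real (sqrt (real (v x))) * complex_of_real (sqrt (real (v x)))) * \<phi> v"
    unfolding ann_def cre_def using False by simp
  also have "\<dots> = of_nat (v x) * \<phi> v" by (subst sqrt_sq_c) auto
  finally show ?thesis .
qed (simp add: cre_def)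

lemma comm: "ann x (cre z \<phi>) w = cre z (ann x \<phi>) w + (if x = z then \<phi> w else 0)"
proof (cases "x = z")
  case True
  then show ?thesis by (simp add: ann_cre_same number algebra_simps)
qed (simp add: comm_ne)

lemma finite_modes[simp]: "finite (modes n)" by (simp add: modes_def)

lemma HGG:
  assumes y: "y \<in> modes n" and l: "l > 0" and sec: "\<And>u. u \<notin> configs n l \<Longrightarrow> \<psi> u = 0"
  shows "Ht n l y \<psi> v = Gt n l y (Gt n l y \<psi>) v - \<psi> v"
proof -
  define c where "c = complex_of_real (1 / sqrt (real l))"
  have cc: "c * c = complex_of_real (1 / real l)"
    unfolding c_def using l by (simp flip: of_real_mult)
  define F where "F x' = cre (xor x' y) (ann x' \<psi>)" for x'
  have GtF: "Gt n l y \<psi> = (\<lambda>w. c * (\<Sum>x'\<in>modes n. F x' w))"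
    by (simp add: Gt_def c_def F_def fun_eq_iff)
  have annG: "ann x (Gt n l y \<psi>) = (\<lambda>w. c * (\<Sum>x'\<in>modes n. 
       cre (xor x' y) (ann x (ann x' \<psi>)) w + (if x = xor x' y then ann x' \<psi> w else 0)))" for x
    unfolding GtF by (rule ext) (simp only: ann_scale ann_sum F_def comm)
  have "Gt n l y (Gt n l y \<psi>) v = c * (\<Sum>x\<in>modes n. cre (xor x y) (ann x (Gt n l y \<psi>)) v)"
    by (simp only: Gt_def[of n l y "Gt n l y \<psi>"] c_def)
  also have "\<dots> = c * (\<Sum>x\<in>modes n. c * (\<Sum>x'\<in>modes n.
       cre (xor x y) (cre (xor x' y) (ann x (ann x' \<psi>))) v
       + (if x = xor x' y then cre (xor x y) (ann x' \<psi>) v else 0)))"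
  proof -
    have ifeq: "cre (xor x y) (\<lambda>w. if x = xor x' y then ann x' \<psi> w else 0) v
        = (if x = xor x' y then cre (xor x y) (ann x' \<psi>) v else 0)" for x x'
      by (simp add: cre_def)
    show ?thesis by (simp only: annG cre_scale cre_sum cre_add ifeq)
  qed
  also have "\<dots> = c * c * (\<Sum>x\<in>modes n. \<Sum>x'\<in>modes n.
       cre (xor x y) (cre (xor x' y) (ann x (ann x' \<psi>))) v)
     + c * c * (\<Sum>x\<in>modes n. \<Sum>x'\<in>modes n. (if x = xor x' y then cre (xor x y) (ann x' \<psi>) v else 0))"
    unfolding sum.distrib by (simp add: sum_distrib_left distrib_left mult.assoc sum.distrib)
  also have "(\<Sum>x\<in>modes n. \<Sum>x'\<in>modes n. (if x = xor x' y then cre (xor x y) (ann x' \<psi>) v else 0))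
      = (\<Sum>x'\<in>modes n. of_nat (v x') * \<psi> v)"
    apply (subst sum.swap)
    apply (rule sum.cong[OF refl])
    subgoal for x using xor_modes[OF _ y, of x] by (simp add: number)
    done
  also have "(\<Sum>x'\<in>modes n. of_nat (v x') * \<psi> v) = of_nat l * \<psi> v"
  proof (cases "v \<in> configs n l")
    case True
    have "(\<Sum>x'\<in>modes n. of_nat (v x') * \<psi> v) = of_nat (\<Sum>x'\<in>modes n. v x') * \<psi> v"
      by (simp add: sum_distrib_right)
    moreover have "(\<Sum>x'\<in>modes n. v x') = l" using True by (simp add: configs_def)
    ultimately show ?thesis by (simp only:)
  next
    case False
    then show ?thesis using sec by simp
  qed
  finally have GG: "Gt n l y (Gt n l y \<psi>) v = complex_of_real (1 / real l) * (\<Sum>x\<in>modes n. \<Sum>x'\<in>modes n.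
       cre (xor x y) (cre (xor x' y) (ann x (ann x' \<psi>))) v) + complex_of_real (1 / real l) * (of_nat l * \<psi> v)"
    unfolding cc .
  have k: "complex_of_real (1 / real l) * (of_nat l * \<psi> v) = \<psi> v" using l by simp
  show ?thesis unfolding GG k Ht_def by simp
qed



definition Bd :: "nat \<Rightarrow> real" where "Bd r = sqrt (real r) + sqrt (2 + 4 * real r)"

lemma Bd_nonneg: "Bd r \<ge> 0" by (simp add: Bd_def)

lemma sqrt_prod_le: "0 \<le> x \<Longrightarrow> 0 \<le> y \<Longrightarrow> 0 \<le> m \<Longrightarrow> x * y \<le> m\<^sup>2 \<Longrightarrow> sqrt x * sqrt y \<le> m"
  by (metis real_sqrt_le_mono real_sqrt_mult real_sqrt_pow2 real_sqrt_unique zero_le_power2 power2_eq_square real_sqrt_abs abs_of_nonneg)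

lemma Bd_prod: "Bd (r + 1) * Bd r + 1 \<le> 9 * real r + 9"
proof -
  define x where "x = real r"
  have x: "x \<ge> 0" by (simp add: x_def)
  have e: "Bd (r+1) * Bd r = sqrt (x+1) * sqrt x + sqrt (x+1) * sqrt (4*x+2) + sqrt (4*x+6) * sqrt x
      + sqrt (4*x+6) * sqrt (4*x+2)"
    by (simp add: Bd_def x_def algebra_simps)
  have 1: "sqrt (x+1) * sqrt x \<le> x + 1/2" by (rule sqrt_prod_le) (use x in \<open>auto simp: power2_eq_square algebra_simps\<close>)
  have 2: "sqrt (x+1) * sqrt (4*x+2) \<le> 2*x + 3/2" by (rule sqrt_prod_le) (use x in \<open>auto simp: power2_eq_square algebra_simps\<close>)
  have 3: "sqrt (4*x+6) * sqrt x \<le> 2*x + 3/2" by (rule sqrt_prod_le) (use x in \<open>auto simp: power2_eq_square algebra_simps\<close>)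
  have 4: "sqrt (4*x+6) * sqrt (4*x+2) \<le> 4*x + 4" by (rule sqrt_prod_le) (use x in \<open>auto simp: power2_eq_square algebra_simps\<close>)
  show ?thesis using 1 2 3 4 unfolding e x_def[symmetric] by linarith
qed

lemma R_ineq:
  fixes b k r :: nat
  assumes "b + k \<le> r"
  shows "sqrt (real b + 1) + sqrt (real b) + sqrt (2 * real k) \<le> Bd r"
proof (cases "r = 0")
  case True
  then have "b = 0" "k = 0" using assms by auto
  then show ?thesis using True by (simp add: Bd_def)
next
  case False
  define p where "p = sqrt (real b + 1) + sqrt (real b)"
  define q where "q = sqrt (2 * real k)"
  have p0: "p \<ge> 0" and q0: "q \<ge> 0" by (auto simp: p_def q_def)
  have pb: "sqrt (real b + 1) * sqrt (real b) \<le> real b + 1/2"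
    by (rule sqrt_prod_le) (auto simp: power2_eq_square algebra_simps)
  have p2: "p\<^sup>2 \<le> 4 * real b + 2"
    unfolding p_def power2_eq_square using pb by (simp add: algebra_simps)
  have q2: "q\<^sup>2 = 2 * real k" by (simp add: q_def)
  have "(p + q)\<^sup>2 \<le> 3/2 * p\<^sup>2 + 3 * q\<^sup>2"
    using sum_squares_ge_zero[of "p - 2*q" 0] by (simp add: power2_eq_square algebra_simps)
  also have "\<dots> \<le> 6 * real r + 3" using p2 q2 assms by (simp add: algebra_simps)
  finally have pq: "(p + q)\<^sup>2 \<le> 6 * real r + 3" .
  define s where "s = sqrt (real r)"
  define t where "t = sqrt (2 + 4 * real r)"
  have s2: "s\<^sup>2 = real r" and t2: "t\<^sup>2 = 2 + 4 * real r" by (auto simp: s_def t_def)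
  have st: "s * t \<ge> 2 * real r"
  proof -
    have "s * t = sqrt (real r * (2 + 4 * real r))" by (simp add: s_def t_def real_sqrt_mult)
    also have "\<dots> \<ge> sqrt ((2 * real r)\<^sup>2)" by (rule real_sqrt_le_mono) (simp add: power2_eq_square algebra_simps)
    also have "sqrt ((2 * real r)\<^sup>2) = 2 * real r" by (simp only: real_sqrt_abs)
    finally show ?thesis by simp
  qed
  have "(s + t)\<^sup>2 \<ge> 9 * real r + 2" using s2 t2 st by (simp add: power2_eq_square algebra_simps)
  moreover have "real r \<ge> 1" using False by simp
  ultimately have "(p + q)\<^sup>2 \<le> (s + t)\<^sup>2" using pq by linarith
  hence "p + q \<le> s + t" by (rule power2_le_imp_le) (simp add: s_def t_def)
  then show ?thesis by (simp add: p_def q_def s_def t_def Bd_def)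
qed

lemma pair_ineq:
  fixes a b :: nat
  shows "sqrt (real a * (real b + 1)) + sqrt (real b * (real a + 1)) \<le> sqrt 2 * (real a + real b)"
proof -
  define p where "p = sqrt (real a * (real b + 1))"
  define q where "q = sqrt (real b * (real a + 1))"
  have "(p + q)\<^sup>2 \<le> 2 * (p\<^sup>2 + q\<^sup>2)"
    using sum_squares_ge_zero[of "p - q" 0] by (simp add: power2_eq_square algebra_simps)
  also have "p\<^sup>2 + q\<^sup>2 = real a * (real b + 1) + real b * (real a + 1)" by (simp add: p_def q_def)
  also have "2 * \<dots> \<le> (sqrt 2 * (real a + real b))\<^sup>2"
  proof -
    have "real a \<le> real a * real a" by (cases a) auto
    moreover have "real b \<le> real b * real b" by (cases b) auto
    ultimately show ?thesis by (simp add: power2_eq_square algebra_simps)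
  qed
  finally have "(p + q)\<^sup>2 \<le> (sqrt 2 * (real a + real b))\<^sup>2" .
  hence "p + q \<le> sqrt 2 * (real a + real b)" by (rule power2_le_imp_le) simp
  then show ?thesis by (simp add: p_def q_def)
qed



definition SS :: "nat \<Rightarrow> nat \<Rightarrow> nat \<Rightarrow> (nat \<Rightarrow> nat) set" where
  "SS n l r = {u \<in> configs n l. l - r \<le> u 0}"
definition sig :: "nat \<Rightarrow> nat \<Rightarrow> (nat \<Rightarrow> nat) \<Rightarrow> (nat \<Rightarrow> nat)" where
  "sig y x v = v(xor x y := v (xor x y) - 1, x := v x + 1)"
definition coef :: "nat \<Rightarrow> nat \<Rightarrow> (nat \<Rightarrow> nat) \<Rightarrow> real" where
  "coef y x v = (if 0 < v (xor x y) then sqrt (real (v (xor x y))) * sqrt (real (v x) + 1) else 0)"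

lemma coef_nonneg: "coef y x v \<ge> 0" by (simp add: coef_def)

lemma cre_ann_expl:
  assumes "y \<noteq> 0"
  shows "cre (xor x y) (ann x \<phi>) v = of_real (coef y x v) * \<phi> (sig y x v)"
proof -
  have xz: "x \<noteq> xor x y" using xor_ne[OF assms] by metis
  show ?thesis using xz unfolding cre_def ann_def coef_def sig_def by (simp add: add.commute)
qed

lemma Gt_expl:
  assumes "y \<noteq> 0"
  shows "Gt n l y \<phi> v = of_real (1 / sqrt (real l)) * (\<Sum>x\<in>modes n. of_real (coef y x v) * \<phi> (sig y x v))"
  unfolding Gt_def using cre_ann_expl[OF assms] by simp

definition MM :: "nat \<Rightarrow> nat \<Rightarrow> nat \<Rightarrow> (nat \<Rightarrow> nat) \<Rightarrow> (nat \<Rightarrow> nat) \<Rightarrow> real" where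
  "MM n l y v u = 1 / sqrt (real l) * (\<Sum>x\<in>modes n. coef y x v * (if sig y x v = u then 1 else 0))"

lemma MM_nonneg: "MM n l y v u \<ge> 0"
  unfolding MM_def by (intro mult_nonneg_nonneg sum_nonneg) (auto simp: coef_nonneg)

lemma Gt_matrix:
  assumes y: "y \<noteq> 0" and S: "finite S" and supp: "\<And>u. u \<notin> S \<Longrightarrow> \<phi> u = 0"
  shows "Gt n l y \<phi> v = (\<Sum>u\<in>S. of_real (MM n l y v u) * \<phi> u)"
proof -
  have d: "(\<Sum>u\<in>S. (if sig y x v = u then \<phi> u else 0)) = \<phi> (sig y x v)" for x
    using S supp by (simp add: sum.delta)
  have "(\<Sum>u\<in>S. of_real (MM n l y v u) * \<phi> u)
     = (\<Sum>u\<in>S. of_real (1 / sqrt (real l)) * (\<Sum>x\<in>modes n. of_real (coef y x v) * (if sig y x v = u then \<phi> u else 0)))"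
  proof (rule sum.cong[OF refl])
    fix u
    have pt: "complex_of_real (if sig y x v = u then 1 else 0) * \<phi> u
       = (if sig y x v = u then \<phi> u else 0)" for x by simp
    show "of_real (MM n l y v u) * \<phi> u = of_real (1 / sqrt (real l)) * (\<Sum>x\<in>modes n. of_real (coef y x v) * (if sig y x v = u then \<phi> u else 0))"
      unfolding MM_def of_real_mult of_real_sum mult.assoc sum_distrib_right
      by (simp only: pt)
  qed
  also have "\<dots> = of_real (1 / sqrt (real l)) * (\<Sum>x\<in>modes n. of_real (coef y x v) * (\<Sum>u\<in>S. (if sig y x v = u then \<phi> u else 0)))"
    by (simp add: sum_distrib_left sum.swap[of _ S])
  also have "\<dots> = Gt n l y \<phi> v" unfolding d Gt_expl[OF y] ..
  finally show ?thesis ..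
qed

lemma row_sum:
  assumes S: "finite S"
  shows "(\<Sum>u\<in>S. MM n l y v u) = 1 / sqrt (real l) * (\<Sum>x\<in>modes n. coef y x v * (if sig y x v \<in> S then 1 else 0))"
proof -
  have d: "(\<Sum>u\<in>S. (if sig y x v = u then 1 else 0)) = (if sig y x v \<in> S then 1 else (0::real))" for x
    using S by (simp add: sum.delta)
  have "(\<Sum>u\<in>S. \<Sum>x\<in>modes n. coef y x v * (if sig y x v = u then 1 else 0))
      = (\<Sum>x\<in>modes n. \<Sum>u\<in>S. coef y x v * (if sig y x v = u then 1 else 0))"
    by (rule sum.swap)
  also have "\<dots> = (\<Sum>x\<in>modes n. coef y x v * (if sig y x v \<in> S then 1 else 0))"
    by (simp only: d flip: sum_distrib_left)
  finally show ?thesis unfolding MM_def by (simp only: flip: sum_distrib_left)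
qed



lemma coef_eq: "coef y x v = sqrt (real (v (xor x y))) * sqrt (real (v x) + 1)"
  by (simp add: coef_def)

lemma sum_split2:
  assumes "finite A" "a \<in> A" "b \<in> A" "a \<noteq> b"
  shows "sum g A = g a + g b + sum g (A - {a, b})"
proof -
  have "sum g A = g a + sum g (A - {a})" using assms by (simp add: sum.remove)
  also have "sum g (A - {a}) = g b + sum g (A - {a} - {b})" using assms by (simp add: sum.remove)
  also have "A - {a} - {b} = A - {a, b}" by auto
  finally show ?thesis by (simp only: add.assoc)
qed

lemma pair_sum:
  fixes w :: "nat \<Rightarrow> nat"
  assumes y: "y \<noteq> 0" and D: "finite D" and cl: "\<And>x. x \<in> D \<Longrightarrow> xor x y \<in> D"
  shows "(\<Sum>x\<in>D. sqrt (real (w x)) * sqrt (real (w (xor x y)) + 1)) \<le> sqrt 2 * (\<Sum>x\<in>D. real (w x))"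
proof -
  define f where "f x = sqrt (real (w x)) * sqrt (real (w (xor x y)) + 1)" for x
  have ri: "(\<Sum>x\<in>D. h (xor x y)) = (\<Sum>x\<in>D. h x)" for h :: "nat \<Rightarrow> real"
    by (rule sum.reindex_bij_witness[of D "\<lambda>x. xor x y" "\<lambda>x. xor x y"]) (auto simp: cl)
  have "2 * (\<Sum>x\<in>D. f x) = (\<Sum>x\<in>D. f x + f (xor x y))"
    by (simp add: sum.distrib ri)
  also have "\<dots> \<le> (\<Sum>x\<in>D. sqrt 2 * (real (w x) + real (w (xor x y))))"
  proof (rule sum_mono)
    fix x
    show "f x + f (xor x y) \<le> sqrt 2 * (real (w x) + real (w (xor x y)))"
      using pair_ineq[of "w x" "w (xor x y)"] unfolding f_def by (simp add: real_sqrt_mult)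
  qed
  also have "\<dots> = 2 * (sqrt 2 * (\<Sum>x\<in>D. real (w x)))"
    by (simp add: sum.distrib ri[of "\<lambda>x. real (w x)"] sum_distrib_left[symmetric])
  finally show ?thesis unfolding f_def by simp
qed

lemma NUM:
  fixes a b k l r :: nat
  assumes "a + b + k = l" "b + k \<le> r"
  shows "sqrt (real a) * sqrt (real b + 1) + sqrt (real b) * sqrt (real a + 1) + sqrt 2 * real k
     \<le> sqrt (real l) * Bd r"
proof -
  have 1: "sqrt (real a) * sqrt (real b + 1) \<le> sqrt (real l) * sqrt (real b + 1)"
    by (rule mult_right_mono) (use assms in auto)
  have 2: "sqrt (real b) * sqrt (real a + 1) \<le> sqrt (real l) * sqrt (real b)"
  proof (cases "b = 0")
    case False
    then have "real a + 1 \<le> real l" using assms by simp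
    then show ?thesis by (simp add: mult.commute mult_left_mono)
  qed simp
  have 3: "sqrt 2 * real k \<le> sqrt (real l) * sqrt (2 * real k)"
  proof -
    have "sqrt 2 * real k = sqrt (2 * real k) * sqrt (real k)"
      by (simp add: real_sqrt_mult)
    also have "\<dots> \<le> sqrt (2 * real k) * sqrt (real l)"
      by (rule mult_left_mono) (use assms in auto)
    finally show ?thesis by (simp add: mult.commute)
  qed
  have "sqrt (real a) * sqrt (real b + 1) + sqrt (real b) * sqrt (real a + 1) + sqrt 2 * real k
     \<le> sqrt (real l) * (sqrt (real b + 1) + sqrt (real b) + sqrt (2 * real k))"
    using 1 2 3 by (simp only: distrib_left)
  also have "\<dots> \<le> sqrt (real l) * Bd r"
    by (rule mult_left_mono[OF R_ineq]) (use assms in auto)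
  finally show ?thesis .
qed

lemma NUMrow:
  fixes a b k l r :: nat
  assumes "a + b + k = l"
  shows "(if l - r \<le> a + 1 then sqrt (real b) * sqrt (real a + 1) else 0)
       + (if l - r \<le> a - 1 then sqrt (real a) * sqrt (real b + 1) else 0)
       + (if l - r \<le> a then sqrt 2 * real k else 0) \<le> sqrt (real l) * Bd r"
proof (cases "l - r \<le> a")
  case True
  then have "b + k \<le> r" using assms by simp
  note n = NUM[OF assms this]
  have e1: "(if l - r \<le> a + 1 then sqrt (real b) * sqrt (real a + 1) else 0) = sqrt (real b) * sqrt (real a + 1)"
    using True by simp
  have e2: "(if l - r \<le> a - 1 then sqrt (real a) * sqrt (real b + 1) else 0) \<le> sqrt (real a) * sqrt (real b + 1)"
    by simp
  have e3: "(if l - r \<le> a then sqrt 2 * real k else 0) = sqrt 2 * real k" using True by simp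
  show ?thesis using n e1 e2 e3 by linarith
next
  case False
  then have nz: "\<not> (l - r \<le> a - 1)" by simp
  have "(if l - r \<le> a + 1 then sqrt (real b) * sqrt (real a + 1) else 0) \<le> sqrt (real l) * Bd r"
  proof (cases "l - r \<le> a + 1 \<and> b > 0")
    case True
    then have br: "real b \<le> real r + 1" and al: "real a + 1 \<le> real l" using assms False by auto
    have "sqrt (real b) * sqrt (real a + 1) \<le> sqrt (real r + 1) * sqrt (real l)"
      by (rule mult_mono) (use br al in auto)
    also have "sqrt (real r + 1) \<le> Bd r"
    proof -
      have "sqrt (real r + 1) \<le> sqrt (2 + 4 * real r)" by simp
      then show ?thesis by (simp add: Bd_def add_increasing)
    qed
    then have "sqrt (real r + 1) * sqrt (real l) \<le> Bd r * sqrt (real l)" by (rule mult_right_mono) simp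
    finally show ?thesis using Bd_nonneg by (simp add: mult.commute)
  next
    case False
    then show ?thesis using Bd_nonneg by auto
  qed
  then show ?thesis using False nz by simp
qed



lemma div_bound:
  assumes "X \<le> sqrt (real l) * B" "B \<ge> 0"
  shows "1 / sqrt (real l) * X \<le> B"
proof (cases "l = 0")
  case False
  then have p: "sqrt (real l) > 0" by simp
  have "1 / sqrt (real l) * X \<le> 1 / sqrt (real l) * (sqrt (real l) * B)"
    by (rule mult_left_mono) (use assms p in auto)
  also have "\<dots> = B" using p by simp
  finally show ?thesis .
qed (use assms in simp)

lemma zero_modes: "0 \<in> modes n" by (simp add: modes_def)

lemma D_closed:
  assumes y: "y \<in> modes n" "y \<noteq> 0" and x: "x \<in> modes n - {0, y}"
  shows "xor x y \<in> modes n - {0, y}"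
proof -
  have "xor x y \<in> modes n" using x y xor_modes by auto
  moreover have "xor x y \<noteq> 0"
  proof
    assume "xor x y = 0" then have "xor (xor x y) y = xor 0 y" by simp
    then show False using x by simp
  qed
  moreover have "xor x y \<noteq> y"
  proof
    assume "xor x y = y" then have "xor (xor x y) y = xor y y" by simp
    then show False using x by simp
  qed
  ultimately show ?thesis by simp
qed

lemma sum_configs:
  assumes u: "u \<in> configs n l" and y: "y \<in> modes n" "y \<noteq> 0"
  shows "u 0 + u y + (\<Sum>x\<in>modes n - {0, y}. u x) = l"
proof -
  have "(\<Sum>x\<in>modes n. u x) = l" using u by (simp add: configs_def)
  then show ?thesis using sum_split2[of "modes n" 0 y u] y zero_modes by simp
qed

lemma col_inner:
  assumes y: "y \<noteq> 0" and V: "finite V"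
  shows "(\<Sum>v\<in>V. coef y x v * (if sig y x v = u then 1 else 0)) \<le> sqrt (real (u x)) * sqrt (real (u (xor x y)) + 1)"
proof -
  define z where "z = xor x y"
  have xz: "x \<noteq> z" using xor_ne[OF y] unfolding z_def by metis
  define t where "t = u(x := u x - 1, z := u z + 1)"
  define g where "g v = coef y x v * (if sig y x v = u then 1 else 0)" for v
  have key: "v = t" if "0 < v z" "sig y x v = u" for v
  proof (rule ext)
    fix w
    have u: "u = v(z := v z - 1, x := v x + 1)" using that(2) by (simp add: sig_def z_def)
    show "v w = t w" using xz that(1) unfolding t_def u by auto
  qed
  have "(\<Sum>v\<in>V. g v) = (\<Sum>v\<in>V. if v = t then g v else 0)"
  proof (rule sum.cong[OF refl])
    fix v
    show "g v = (if v = t then g v else 0)"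
      using key[of v] by (cases "0 < v z") (auto simp: g_def coef_def z_def)
  qed
  also have "\<dots> = (if t \<in> V then g t else 0)" using V by (simp add: sum.delta)
  also have "\<dots> \<le> sqrt (real (u x)) * sqrt (real (u z) + 1)"
  proof (cases "t \<in> V \<and> sig y x t = u")
    case True
    then have h: "sig y x t = u" by simp
    have "u x = t x + 1" using h[symmetric] by (simp add: sig_def)
    moreover have "t z = u z + 1" using xz by (simp add: t_def)
    ultimately have "g t = sqrt (real (u z) + 1) * sqrt (real (u x))"
      using h by (simp add: g_def coef_def z_def[symmetric] add.commute)
    then show ?thesis using True by (simp add: mult.commute)
  next
    case False
    then show ?thesis by (auto simp: g_def)
  qed
  finally show ?thesis unfolding g_def z_def .
qed

lemma col_sum:
  assumes y: "y \<noteq> 0" and V: "finite V"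
  shows "(\<Sum>v\<in>V. MM n l y v u) \<le> 1 / sqrt (real l) * (\<Sum>x\<in>modes n. sqrt (real (u x)) * sqrt (real (u (xor x y)) + 1))"
proof -
  have "(\<Sum>v\<in>V. MM n l y v u) = 1 / sqrt (real l) * (\<Sum>x\<in>modes n. \<Sum>v\<in>V. coef y x v * (if sig y x v = u then 1 else 0))"
    unfolding MM_def by (simp only: sum_distrib_left[symmetric] sum.swap[of _ V])
  also have "\<dots> \<le> 1 / sqrt (real l) * (\<Sum>x\<in>modes n. sqrt (real (u x)) * sqrt (real (u (xor x y)) + 1))"
    by (rule mult_left_mono[OF sum_mono[OF col_inner[OF y V]]]) simp
  finally show ?thesis .
qed



lemma col_bound:
  assumes u: "u \<in> SS n l r" and y: "y \<in> modes n" "y \<noteq> 0"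
  shows "1 / sqrt (real l) * (\<Sum>x\<in>modes n. sqrt (real (u x)) * sqrt (real (u (xor x y)) + 1)) \<le> Bd r"
proof (rule div_bound[OF _ Bd_nonneg])
  define D where "D = modes n - {0, y}"
  define k where "k = (\<Sum>x\<in>D. u x)"
  have uc: "u \<in> configs n l" and ur: "l - r \<le> u 0" using u by (auto simp: SS_def)
  have sl: "u 0 + u y + k = l" using sum_configs[OF uc y] by (simp add: k_def D_def)
  have br: "u y + k \<le> r" using sl ur by simp
  have "(\<Sum>x\<in>modes n. sqrt (real (u x)) * sqrt (real (u (xor x y)) + 1))
     = sqrt (real (u 0)) * sqrt (real (u y) + 1) + sqrt (real (u y)) * sqrt (real (u 0) + 1)
       + (\<Sum>x\<in>D. sqrt (real (u x)) * sqrt (real (u (xor x y)) + 1))"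
    using sum_split2[of "modes n" 0 y "\<lambda>x. sqrt (real (u x)) * sqrt (real (u (xor x y)) + 1)"] y zero_modes
    by (simp add: D_def)
  also have "(\<Sum>x\<in>D. sqrt (real (u x)) * sqrt (real (u (xor x y)) + 1)) \<le> sqrt 2 * real k"
    using pair_sum[of y D u] y D_closed[OF y] by (simp add: D_def k_def)
  finally show "(\<Sum>x\<in>modes n. sqrt (real (u x)) * sqrt (real (u (xor x y)) + 1)) \<le> sqrt (real l) * Bd r"
    using NUM[OF sl br] by simp
qed

lemma row_bound:
  assumes v: "v \<in> configs n l" and y: "y \<in> modes n" "y \<noteq> 0"
  shows "1 / sqrt (real l) * (\<Sum>x\<in>modes n. coef y x v * (if sig y x v \<in> SS n l r then 1 else 0)) \<le> Bd r"
proof (rule div_bound[OF _ Bd_nonneg])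
  define D where "D = modes n - {0, y}"
  define k where "k = (\<Sum>x\<in>D. v x)"
  define g where "g x = coef y x v * (if sig y x v \<in> SS n l r then 1 else 0)" for x
  have sl: "v 0 + v y + k = l" using sum_configs[OF v y] by (simp add: k_def D_def)
  have fD: "finite D" by (simp add: D_def)
  have g0: "g 0 \<le> (if l - r \<le> v 0 + 1 then sqrt (real (v y)) * sqrt (real (v 0) + 1) else 0)"
  proof -
    have "(sig y 0 v) 0 = v 0 + 1" by (simp add: sig_def)
    then show ?thesis by (auto simp: g_def coef_def SS_def)
  qed
  have gy: "g y \<le> (if l - r \<le> v 0 - 1 then sqrt (real (v 0)) * sqrt (real (v y) + 1) else 0)"
  proof -
    have "(sig y y v) 0 = v 0 - 1" using y by (simp add: sig_def)
    then show ?thesis by (auto simp: g_def coef_def SS_def)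
  qed
  have gD: "(\<Sum>x\<in>D. g x) \<le> (if l - r \<le> v 0 then sqrt 2 * real k else 0)"
  proof (cases "l - r \<le> v 0")
    case True
    have ri: "(\<Sum>x\<in>D. h (xor x y)) = (\<Sum>x\<in>D. h x)" for h :: "nat \<Rightarrow> real"
      by (rule sum.reindex_bij_witness[of D "\<lambda>x. xor x y" "\<lambda>x. xor x y"])
         (use D_closed[OF y] in \<open>auto simp: D_def\<close>)
    have "(\<Sum>x\<in>D. g x) \<le> (\<Sum>x\<in>D. coef y x v)"
      by (rule sum_mono) (simp add: g_def coef_nonneg)
    also have "\<dots> = (\<Sum>x\<in>D. (\<lambda>x. sqrt (real (v x)) * sqrt (real (v (xor x y)) + 1)) (xor x y))"
      by (simp add: coef_eq)
    also have "\<dots> = (\<Sum>x\<in>D. sqrt (real (v x)) * sqrt (real (v (xor x y)) + 1))"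
      by (rule ri)
    also have "\<dots> \<le> sqrt 2 * real k"
      using pair_sum[of y D v] y D_closed[OF y] by (simp add: D_def k_def)
    finally show ?thesis using True by simp
  next
    case False
    have "g x = 0" if "x \<in> D" for x
    proof -
      have "xor x y \<noteq> 0" "x \<noteq> 0" using D_closed[OF y] that by (auto simp: D_def)
      then have "(sig y x v) 0 = v 0" by (simp add: sig_def)
      then show ?thesis using False by (simp add: g_def SS_def)
    qed
    then show ?thesis using False by simp
  qed
  have "(\<Sum>x\<in>modes n. g x) = g 0 + g y + (\<Sum>x\<in>D. g x)"
    using sum_split2[of "modes n" 0 y] y zero_modes by (simp add: D_def)
  also have "\<dots> \<le> sqrt (real l) * Bd r"
    using g0 gy gD NUMrow[OF sl, of r] by linarith
  finally show "(\<Sum>x\<in>modes n. coef y x v * (if sig y x v \<in> SS n l r then 1 else 0)) \<le> sqrt (real l) * Bd r"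
    unfolding g_def .
qed

lemma G_bound:
  assumes y: "y \<in> modes n" "y \<noteq> 0" and supp: "\<And>u. u \<notin> SS n l r \<Longrightarrow> \<phi> u = 0"
  shows "snorm n l (Gt n l y \<phi>) \<le> Bd r * snorm n l \<phi>"
proof (cases "finite (configs n l)")
  case False
  then show ?thesis by (simp add: snorm_def)
next
  case True
  define S where "S = SS n l r"
  have SV: "S \<subseteq> configs n l" by (auto simp: S_def SS_def)
  have fS: "finite S" using True SV finite_subset by blast
  have "(\<Sum>v\<in>configs n l. (cmod (Gt n l y \<phi> v))\<^sup>2)
      = (\<Sum>v\<in>configs n l. (cmod (\<Sum>u\<in>S. of_real (MM n l y v u) * \<phi> u))\<^sup>2)"
    using Gt_matrix[OF y(2) fS, of \<phi>] supp by (simp add: S_def)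
  also have "\<dots> \<le> Bd r * Bd r * (\<Sum>u\<in>S. (cmod (\<phi> u))\<^sup>2)"
  proof (rule schur[OF True fS MM_nonneg Bd_nonneg])
    fix v assume "v \<in> configs n l"
    then show "(\<Sum>u\<in>S. MM n l y v u) \<le> Bd r"
      using row_sum[OF fS, of n l y v] row_bound[OF _ y, of v l r] by (simp add: S_def)
  next
    fix u assume "u \<in> S"
    then show "(\<Sum>v\<in>configs n l. MM n l y v u) \<le> Bd r"
      using col_sum[OF y(2) True, of n l u] col_bound[OF _ y, of u l r] by (simp add: S_def)
  qed
  also have "\<dots> \<le> Bd r * Bd r * (\<Sum>u\<in>configs n l. (cmod (\<phi> u))\<^sup>2)"
    by (rule mult_left_mono[OF sum_mono2[OF True SV]]) auto
  finally have "snorm n l (Gt n l y \<phi>) \<le> sqrt ((Bd r)\<^sup>2 * (\<Sum>u\<in>configs n l. (cmod (\<phi> u))\<^sup>2))"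
    unfolding snorm_def by (simp add: power2_eq_square)
  also have "\<dots> = Bd r * snorm n l \<phi>"
    using Bd_nonneg by (simp add: snorm_def real_sqrt_mult)
  finally show ?thesis .
qed



lemma Con_supp: "u \<notin> SS n l r \<Longrightarrow> Con n l r \<psi> u = 0"
  by (auto simp: Con_def SS_def)

lemma Con_norm: "snorm n l (Con n l r \<psi>) \<le> snorm n l \<psi>"
  by (rule snorm_mono) (simp add: Con_def)

lemma sig_back:
  assumes x: "x \<in> modes n" and y: "y \<in> modes n" "y \<noteq> 0" and vz: "0 < v (xor x y)"
    and s: "sig y x v \<in> SS n l r"
  shows "v \<in> SS n l (Suc r)"
proof -
  define z where "z = xor x y"
  define u where "u = sig y x v"
  have xz: "x \<noteq> z" using xor_ne[OF y(2)] unfolding z_def by metis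
  have zm: "z \<in> modes n" using xor_modes[OF x y(1)] by (simp add: z_def)
  have u: "u = v(z := v z - 1, x := v x + 1)" by (simp add: u_def sig_def z_def)
  have uc: "u \<in> configs n l" and ur: "l - r \<le> u 0" using s by (auto simp: SS_def u_def)
  have out: "v w = 0" if "w \<notin> modes n" for w
  proof -
    have "w \<noteq> x" "w \<noteq> z" using that x zm by auto
    then have "v w = u w" by (simp add: u)
    then show ?thesis using uc that by (simp add: configs_def)
  qed
  have "(\<Sum>w\<in>modes n. v w) = (\<Sum>w\<in>modes n. u w)"
  proof -
    have r: "(\<Sum>w\<in>modes n - {x, z}. v w) = (\<Sum>w\<in>modes n - {x, z}. u w)"
      by (rule sum.cong) (auto simp: u)
    have "u x + u z = v x + v z" using xz vz unfolding z_def[symmetric] by (simp add: u)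
    then show ?thesis using sum_split2[of "modes n" x z v] sum_split2[of "modes n" x z u] x zm xz r by simp
  qed
  then have vc: "v \<in> configs n l" using uc out by (simp add: configs_def)
  have "u 0 \<le> v 0 + 1" by (cases "z = 0"; cases "x = 0"; simp add: u)
  then have "l - Suc r \<le> v 0" using ur by linarith
  then show ?thesis using vc by (simp add: SS_def)
qed

lemma Gt_supp:
  assumes y: "y \<in> modes n" "y \<noteq> 0" and supp: "\<And>u. u \<notin> SS n l r \<Longrightarrow> \<phi> u = 0"
    and v: "v \<notin> SS n l (Suc r)"
  shows "Gt n l y \<phi> v = 0"
proof -
  have t: "of_real (coef y x v) * \<phi> (sig y x v) = 0" if x: "x \<in> modes n" for x
  proof (cases "0 < v (xor x y) \<and> sig y x v \<in> SS n l r")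
    case True
    then show ?thesis using sig_back[OF x y] v by blast
  next
    case False
    then show ?thesis using supp by (auto simp: coef_def)
  qed
  have "(\<Sum>x\<in>modes n. of_real (coef y x v) * \<phi> (sig y x v)) = 0"
    by (rule sum.neutral) (blast intro: t)
  then show ?thesis unfolding Gt_expl[OF y(2)] by simp
qed

lemma opnorm_le:
  assumes "\<And>\<psi>. in_sector n l \<psi> \<Longrightarrow> snorm n l \<psi> \<le> 1 \<Longrightarrow> snorm n l (A \<psi>) \<le> B"
  shows "opnorm n l A \<le> B"
  unfolding opnorm_def
proof (rule cSup_least)
  have "in_sector n l (\<lambda>_. 0)" by (simp add: in_sector_def)
  moreover have "snorm n l (\<lambda>_. 0) \<le> 1" by (simp add: snorm_def)
  ultimately show "{snorm n l (A \<psi>) |\<psi>. in_sector n l \<psi> \<and> snorm n l \<psi> \<le> 1} \<noteq> {}" by blast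
next
  fix x assume "x \<in> {snorm n l (A \<psi>) |\<psi>. in_sector n l \<psi> \<and> snorm n l \<psi> \<le> 1}"
  then show "x \<le> B" using assms by blast
qed

theorem mainTheorem11:
  fixes n l r y :: nat
  assumes "y \<in> modes n" and "y \<noteq> 0"
  shows "opnorm n l (Gt n l y \<circ> Con n l r) \<le> sqrt (real r) + sqrt (2 + 4 * real r)
     \<and> opnorm n l (Ht n l y \<circ> Con n l r) \<le> 9 * real r + 9"
proof
  note y = assms
  show "opnorm n l (Gt n l y \<circ> Con n l r) \<le> sqrt (real r) + sqrt (2 + 4 * real r)"
  proof (rule opnorm_le)
    fix \<psi> assume "in_sector n l \<psi>" and n1: "snorm n l \<psi> \<le> 1"
    have "snorm n l (Gt n l y (Con n l r \<psi>)) \<le> Bd r * snorm n l (Con n l r \<psi>)"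
      by (rule G_bound[OF y Con_supp])
    also have "\<dots> \<le> Bd r * 1"
      by (rule mult_left_mono[OF order_trans[OF Con_norm n1] Bd_nonneg])
    finally show "snorm n l ((Gt n l y \<circ> Con n l r) \<psi>) \<le> sqrt (real r) + sqrt (2 + 4 * real r)"
      by (simp add: Bd_def)
  qed
  show "opnorm n l (Ht n l y \<circ> Con n l r) \<le> 9 * real r + 9"
  proof (rule opnorm_le)
    fix \<psi> assume "in_sector n l \<psi>" and n1: "snorm n l \<psi> \<le> 1"
    define \<phi> where "\<phi> = Con n l r \<psi>"
    have ph1: "snorm n l \<phi> \<le> 1" using Con_norm n1 unfolding \<phi>_def by (rule order_trans)
    have ph0: "snorm n l \<phi> \<ge> 0" by (rule snorm_nonneg)
    have supp: "\<And>u. u \<notin> SS n l r \<Longrightarrow> \<phi> u = 0" by (simp add: \<phi>_def Con_supp)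
    show "snorm n l ((Ht n l y \<circ> Con n l r) \<psi>) \<le> 9 * real r + 9"
    proof (cases "l = 0")
      case True
      then have "Ht n l y \<phi> = (\<lambda>_. 0)" by (simp add: Ht_def fun_eq_iff)
      then show ?thesis by (simp add: \<phi>_def snorm_def)
    next
      case False
      have sec: "\<And>u. u \<notin> configs n l \<Longrightarrow> \<phi> u = 0" using supp by (auto simp: SS_def)
      have "Ht n l y \<phi> = (\<lambda>v. Gt n l y (Gt n l y \<phi>) v - \<phi> v)"
        using HGG[OF y(1) _ sec] False by (simp add: fun_eq_iff)
      then have "snorm n l (Ht n l y \<phi>) \<le> snorm n l (Gt n l y (Gt n l y \<phi>)) + snorm n l \<phi>"
        using snorm_diff by simp
      also have "snorm n l (Gt n l y (Gt n l y \<phi>)) \<le> Bd (Suc r) * snorm n l (Gt n l y \<phi>)"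
        by (rule G_bound[OF y Gt_supp[OF y supp]])
      also have "snorm n l (Gt n l y \<phi>) \<le> Bd r * snorm n l \<phi>"
        by (rule G_bound[OF y supp])
      finally have "snorm n l (Ht n l y \<phi>) \<le> Bd (Suc r) * (Bd r * snorm n l \<phi>) + snorm n l \<phi>"
        using Bd_nonneg by (simp add: mult_left_mono)
      also have "\<dots> = (Bd (r + 1) * Bd r + 1) * snorm n l \<phi>" by (simp add: algebra_simps)
      also have "\<dots> \<le> (9 * real r + 9) * 1"
        by (rule mult_mono[OF Bd_prod ph1]) (use Bd_prod ph0 in auto)
      finally show ?thesis by (simp add: \<phi>_def)
    qed
  qed
qed

end
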